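(* Let $(a_j)_{j\in\mathbb{N}_0}$ be a complex sequence with $\sum_j|a_j|<\infty$, let $(b_j)_{j\in\mathbb{N}_0}$ be a strictly increasing sequence of positive reals with $b_j\to\infty$, set $b_{-1}=0$ and $\Delta b_j=\min(b_j-b_{j-1},b_{j+1}-b_j)$, and let $f(t)=\sum_{j=0}^\infty a_je^{i b_jt}$. If for some $\alpha\in\,]0,1[$ the function $f$ is Hölder continuous of order $\alpha$ at some point $t_0\in\mathbb{R}$, then $\sup_j|a_j|(\Delta b_j)^\alpha<\infty$.
   Context: A function $g\colon\mathbb{R}\to\mathbb{C}$ is Hölder continuous of order $\alpha$ at $t_0$ if there exist constants $L>0$, $\eta>0$ such that $|g(t)-g(t_0)|\le L|t-t_0|^\alpha$ for all $t\in\,]t_0-\eta,t_0+\eta[$. *)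

theory Defs
  imports "HOL-Analysis.Analysis"
begin

definition holder_at :: "real \<Rightarrow> (real \<Rightarrow> complex) \<Rightarrow> real \<Rightarrow> bool" where
  "holder_at \<alpha> g t0 \<longleftrightarrow> (\<exists>L>0. \<exists>\<eta>>0. \<forall>t. \<bar>t - t0\<bar> < \<eta> \<longrightarrow>
      norm (g t - g t0) \<le> L * \<bar>t - t0\<bar> powr \<alpha>)"

definition bprev :: "(nat \<Rightarrow> real) \<Rightarrow> nat \<Rightarrow> real" where
  "bprev b j = (if j = 0 then 0 else b (j - 1))"

definition delta_b :: "(nat \<Rightarrow> real) \<Rightarrow> nat \<Rightarrow> real" where
  "delta_b b j = min (b j - bprev b j) (b (Suc j) - b j)"

end

theory Submission
  imports Defs
begin

definition Dk :: "real \<Rightarrow> real \<Rightarrow> real" where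
  "Dk e s = indicator {-1..1} s + indicator {1..} s * s powr e + indicator {1..} (-s) * (-s) powr e"

lemma Dk_integrable:
  assumes "e < -1" shows "integrable lborel (Dk e)"
proof -
  have "((\<lambda>x. x powr e) has_integral -(1 powr (e+1)) / (e+1)) {1..}"
    by (rule has_integral_powr_to_inf) (use assms in auto)
  hence "(\<lambda>x. x powr e) integrable_on {1..}" by (auto simp: integrable_on_def)
  hence "(\<lambda>x. x powr e) absolutely_integrable_on {1..}"
    by (rule nonnegative_absolutely_integrable_1) auto
  hence "integrable lebesgue (\<lambda>x. indicator {1..} x *\<^sub>R x powr e)"
    by (simp add: set_integrable_def)
  hence I1: "integrable lborel (\<lambda>x. indicator {1..} x * x powr e)"
    by (subst (asm) integrable_completion) auto
  have I2: "integrable lborel (\<lambda>x. indicator {1..} (0 + (-1) * x) * (0 + (-1) * x) powr e)"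
    by (rule lborel_integrable_real_affine[OF I1]) auto
  have I3: "integrable lborel (\<lambda>x. indicator {-1..1::real} x :: real)"
    by simp
  show ?thesis unfolding Dk_def
    using Bochner_Integration.integrable_add[OF Bochner_Integration.integrable_add[OF I3 I1] I2] by simp
qed

definition gk :: "real \<Rightarrow> real" where "gk s = (1 - cos s) / s^2"

lemma gk_nonneg: "0 \<le> gk s"
  unfolding gk_def by simp

lemma one_minus_cos_le: "1 - cos (s::real) \<le> s^2 / 2"
proof -
  have "cos s = cos (2 * (s/2))" by simp
  also have "\<dots> = 1 - 2 * (sin (s/2))^2" by (rule cos_double_sin)
  finally have e: "1 - cos s = 2 * (sin (s/2))^2" by simp
  have "\<bar>sin (s/2)\<bar> \<le> \<bar>s/2\<bar>" by (rule abs_sin_x_le_abs_x)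
  hence "(sin (s/2))^2 \<le> (s/2)^2"
    by (metis abs_le_square_iff)
  thus ?thesis using e by (simp add: power_divide)
qed

lemma gk_le_half: "gk s \<le> 1/2"
proof (cases "s = 0")
  case False
  hence "s^2 > 0" by simp
  thus ?thesis unfolding gk_def using one_minus_cos_le[of s]
    by (simp add: divide_le_eq)
qed (simp add: gk_def)

lemma gk_le_inv: "gk s \<le> 2 / s^2"
  unfolding gk_def by (intro divide_right_mono) (auto simp: algebra_simps, smt (verit) cos_ge_minus_one)

lemma gk_measurable[measurable]: "gk \<in> borel_measurable borel"
  unfolding gk_def by measurable

lemma gk_powr_bound:
  assumes "0 \<le> \<beta>"
  shows "gk s * \<bar>s\<bar> powr \<beta> \<le> 2 * Dk (\<beta> - 2) s"
proof (cases "\<bar>s\<bar> \<le> 1")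
  case True
  have "\<bar>s\<bar> powr \<beta> \<le> 1" using True assms by (simp add: powr_le1)
  hence "gk s * \<bar>s\<bar> powr \<beta> \<le> 1/2 * 1"
    by (intro mult_mono gk_le_half) (auto simp: gk_nonneg)
  moreover have "Dk (\<beta> - 2) s \<ge> 1" using True unfolding Dk_def
    by (auto simp: indicator_def)
  ultimately show ?thesis by simp
next
  case False
  hence sp: "\<bar>s\<bar> > 1" by simp
  have "gk s * \<bar>s\<bar> powr \<beta> \<le> 2 / s^2 * \<bar>s\<bar> powr \<beta>"
    by (intro mult_right_mono gk_le_inv) auto
  also have "2 / s^2 * \<bar>s\<bar> powr \<beta> = 2 * \<bar>s\<bar> powr (\<beta> - 2)"
  proof -
    have "s^2 = \<bar>s\<bar> powr 2" using sp by (simp add: powr_realpow)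
    thus ?thesis using sp by (simp add: powr_diff)
  qed
  also have "\<bar>s\<bar> powr (\<beta> - 2) \<le> Dk (\<beta> - 2) s"
    using sp unfolding Dk_def by (cases "s > 0") (auto simp: indicator_def)
  finally show ?thesis by simp
qed

lemma gk_integrable: "integrable lborel gk"
proof (rule Bochner_Integration.integrable_bound)
  show "integrable lborel (\<lambda>s. 2 * Dk (0 - 2) s)" using Dk_integrable by simp
  show "AE x in lborel. norm (gk x) \<le> norm (2 * Dk (0 - 2) x)"
  proof (rule AE_I2)
    fix x
    have "gk x \<le> 2 * Dk (0 - 2) x"
    proof (cases "x = 0")
      case True thus ?thesis by (simp add: gk_def Dk_def)
    next
      case False thus ?thesis using gk_powr_bound[of 0 x] by simp
    qed
    thus "norm (gk x) \<le> norm (2 * Dk (0 - 2) x)" using gk_nonneg[of x] by simp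
  qed
qed simp

lemma gk_powr_integrable:
  assumes "0 \<le> \<beta>" "\<beta> < 1"
  shows "integrable lborel (\<lambda>s. gk s * \<bar>s\<bar> powr \<beta>)"
proof (rule Bochner_Integration.integrable_bound)
  show "integrable lborel (\<lambda>s. 2 * Dk (\<beta> - 2) s)" using Dk_integrable assms by simp
  show "AE x in lborel. norm (gk x * \<bar>x\<bar> powr \<beta>) \<le> norm (2 * Dk (\<beta> - 2) x)"
  proof (rule AE_I2)
    fix x
    have "0 \<le> gk x * \<bar>x\<bar> powr \<beta>" using gk_nonneg[of x] by simp
    thus "norm (gk x * \<bar>x\<bar> powr \<beta>) \<le> norm (2 * Dk (\<beta> - 2) x)"
      using gk_powr_bound[OF assms(1), of x] by simp
  qed
qed simp

lemma J_eq:
  "(\<lambda>s. (1 - cos (a * s)) / s^2) = (\<lambda>s. a^2 * gk (0 + a * s))"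
  by (rule ext) (auto simp: gk_def power_mult_distrib)

lemma J_integrable: "integrable lborel (\<lambda>s. (1 - cos ((a::real) * s)) / s^2)"
proof (cases "a = 0")
  case True
  have "(\<lambda>s::real. (1 - cos (a * s)) / s^2) = (\<lambda>s. 0::real)" using True by simp
  thus ?thesis by simp
next
  case False
  show ?thesis unfolding J_eq
    by (intro Bochner_Integration.integrable_mult_right lborel_integrable_real_affine[OF gk_integrable] False)
qed

lemma J_integral: "(LBINT s. (1 - cos ((a::real) * s)) / s^2) = \<bar>a\<bar> * (LBINT s. gk s)"
proof (cases "a = 0")
  case True thus ?thesis by simp
next
  case False
  have "(LBINT s. gk s) = \<bar>a\<bar> *\<^sub>R (LBINT s. gk (0 + a * s))"
    by (rule lborel_integral_real_affine[OF False])
  hence "(LBINT s. gk (0 + a * s)) = (LBINT s. gk s) / \<bar>a\<bar>" using False by simp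
  moreover have q: "a * a / \<bar>a\<bar> = \<bar>a\<bar>" using False
    by (metis abs_mult_self_eq abs_eq_0 nonzero_mult_div_cancel_right)
  ultimately show ?thesis unfolding J_eq using False by (simp add: power2_eq_square) (metis q times_divide_eq_left)
qed

definition Kh :: "real \<Rightarrow> real \<Rightarrow> real" where "Kh h s = (1 - cos (h * s)) / s^2"

lemma Kh_nonneg: "0 \<le> Kh h s" unfolding Kh_def by simp

lemma Kh_integrable: "integrable lborel (Kh h)"
  unfolding Kh_def by (rule J_integrable)

lemma Kh_measurable[measurable]: "Kh h \<in> borel_measurable borel"
  unfolding Kh_def by measurable

lemma Kh_cos_identity:
  "Kh h s * cos (l * s) = ((1 - cos ((l + h) * s)) / s^2 + (1 - cos ((l - h) * s)) / s^2) / 2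
      - (1 - cos (l * s)) / s^2"
proof (cases "s = 0")
  case False
  have "cos ((l + h) * s) + cos ((l - h) * s) = 2 * cos (l * s) * cos (h * s)"
    by (simp add: distrib_right left_diff_distrib cos_add cos_diff)
  hence e: "cos ((l + h) * s) = 2 * cos (l * s) * cos (h * s) - cos ((l - h) * s)" by simp
  show ?thesis unfolding Kh_def e using False by (simp add: field_simps)
qed (simp add: Kh_def)

lemma Kh_cos_integral:
  "(LBINT s. Kh h s * cos (l * s)) = (LBINT s. gk s) * ((\<bar>l + h\<bar> + \<bar>l - h\<bar>) / 2 - \<bar>l\<bar>)"
proof -
  have "(LBINT s. Kh h s * cos (l * s)) = ((LBINT s. (1 - cos ((l + h) * s)) / s^2) + (LBINT s. (1 - cos ((l - h) * s)) / s^2)) / 2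
      - (LBINT s. (1 - cos (l * s)) / s^2)"
    unfolding Kh_cos_identity
    by (subst Bochner_Integration.integral_diff, (intro J_integrable Bochner_Integration.integrable_divide Bochner_Integration.integrable_add)+,
        subst integral_divide_zero, subst Bochner_Integration.integral_add, (intro J_integrable)+) simp
  thus ?thesis unfolding J_integral by (simp add: algebra_simps)
qed

lemma Kh_sin_integral:
  "(LBINT s. Kh h s * sin (l * s)) = 0"
proof -
  have "(LBINT s. Kh h s * sin (l * s)) = \<bar>-1\<bar> *\<^sub>R (LBINT s. Kh h (0 + -1 * s) * sin (l * (0 + -1 * s)))"
    by (rule lborel_integral_real_affine) simp
  also have "\<dots> = - (LBINT s. Kh h s * sin (l * s))"
    by (simp add: Kh_def)
  finally show ?thesis by simp
qed

lemma Kh_exp_integrable: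
  "integrable lborel (\<lambda>s. complex_of_real (Kh h s) * exp (\<i> * complex_of_real (l * s)))"
proof (rule Bochner_Integration.integrable_bound[OF Kh_integrable])
  show "AE x in lborel. norm (complex_of_real (Kh h x) * exp (\<i> * complex_of_real (l * x))) \<le> norm (Kh h x)"
    by (intro AE_I2) (simp add: norm_mult)
qed measurable

lemma Kh_exp_integral:
  "(\<integral>s. complex_of_real (Kh h s) * exp (\<i> * complex_of_real (l * s)) \<partial>lborel)
     = complex_of_real ((LBINT s. gk s) * ((\<bar>l + h\<bar> + \<bar>l - h\<bar>) / 2 - \<bar>l\<bar>))"
proof -
  have eq: "(\<lambda>s. complex_of_real (Kh h s) * exp (\<i> * complex_of_real (l * s)))
     = (\<lambda>s. complex_of_real (Kh h s * cos (l * s)) + \<i> * complex_of_real (Kh h s * sin (l * s)))"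
    by (rule ext) (simp add: exp_Euler cos_of_real sin_of_real algebra_simps del: of_real_mult, simp)
  have i1: "integrable lborel (\<lambda>s. Kh h s * cos (l * s))"
    by (rule Bochner_Integration.integrable_bound[OF Kh_integrable[of h]])
       (auto intro!: AE_I2 simp: abs_mult Kh_nonneg intro!: mult_left_le[OF abs_cos_le_one Kh_nonneg])
  have i2: "integrable lborel (\<lambda>s. Kh h s * sin (l * s))"
    by (rule Bochner_Integration.integrable_bound[OF Kh_integrable[of h]])
       (auto intro!: AE_I2 simp: abs_mult Kh_nonneg intro!: mult_left_le[OF abs_sin_le_one Kh_nonneg])
  have "(\<integral>s. complex_of_real (Kh h s * cos (l * s)) + \<i> * complex_of_real (Kh h s * sin (l * s)) \<partial>lborel)
    = (\<integral>s. complex_of_real (Kh h s * cos (l * s)) \<partial>lborel) + \<i> * (\<integral>s. complex_of_real (Kh h s * sin (l * s)) \<partial>lborel)"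
    by (subst Bochner_Integration.integral_add)
       (auto intro!: Bochner_Integration.integrable_mult_right integrable_of_real i1 i2 simp del: of_real_mult)
  also have "\<dots> = complex_of_real ((LBINT s. gk s) * ((\<bar>l + h\<bar> + \<bar>l - h\<bar>) / 2 - \<bar>l\<bar>))"
    unfolding integral_complex_of_real Kh_cos_integral Kh_sin_integral by simp
  finally show ?thesis unfolding eq .
qed

lemma C_pos: "(LBINT s. gk s) > 0"
proof -
  define k :: real where "k = (1 - cos 1) / 4"
  have "cos 1 < cos (0::real)" by (rule cos_monotone_0_pi) (use pi_gt3 in auto)
  hence kpos: "k > 0" unfolding k_def by simp
  have le: "indicator {1..2::real} s * k \<le> gk s" for s :: real
  proof (cases "s \<in> {1..2}")
    case True
    hence "cos s \<le> cos 1" using pi_gt3 by (subst cos_mono_le_eq) auto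
    hence "1 - cos 1 \<le> 1 - cos s" by simp
    moreover have "s^2 \<le> 4" using True unfolding power2_eq_square by (intro order.trans[OF mult_mono[of s 2 s 2]]) auto
    moreover have "s^2 > 0" using True by auto
    moreover have "0 \<le> 1 - cos (1::real)" by simp
    ultimately have "(1 - cos 1) / 4 \<le> (1 - cos s) / s^2"
      by (meson frac_le order.trans order_refl zero_less_numeral less_imp_le)
    thus ?thesis using True by (simp add: k_def gk_def)
  qed (simp add: gk_nonneg)
  have "(LBINT s. indicator {1..2::real} s * k) \<le> (LBINT s. gk s)"
    by (rule integral_mono[OF _ gk_integrable le]) (simp add: integrable_real_mult_indicator)
  moreover have "(LBINT s. indicator {1..2::real} s * k) = k" by simp
  ultimately show ?thesis using kpos by simp
qed

lemma T_zero:
  assumes "0 \<le> h" "h \<le> \<bar>l\<bar>" shows "(\<bar>l + h\<bar> + \<bar>l - h\<bar>) / 2 - \<bar>l\<bar> = (0::real)"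
  using assms by (cases "l \<ge> 0") (auto simp: abs_if split: if_splits)

lemma Kh_powr_integral:
  assumes "h > 0" "0 \<le> \<alpha>" "\<alpha> < 1"
  shows "integrable lborel (\<lambda>s. Kh h s * \<bar>s\<bar> powr \<alpha>)"
    and "(LBINT s. Kh h s * \<bar>s\<bar> powr \<alpha>) = h * (LBINT s. gk s * \<bar>s\<bar> powr \<alpha>) / h powr \<alpha>"
proof -
  let ?G = "\<lambda>u. gk u * \<bar>u\<bar> powr \<alpha>"
  have eq: "(\<lambda>s. Kh h s * \<bar>s\<bar> powr \<alpha>) = (\<lambda>s. (h^2 / h powr \<alpha>) * ?G (0 + h * s))"
  proof (rule ext)
    fix s
    have "\<bar>h * s\<bar> powr \<alpha> = h powr \<alpha> * \<bar>s\<bar> powr \<alpha>"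
      using assms by (simp add: abs_mult powr_mult)
    moreover have "h powr \<alpha> > 0" using assms by simp
    ultimately show "Kh h s * \<bar>s\<bar> powr \<alpha> = (h^2 / h powr \<alpha>) * ?G (0 + h * s)"
      unfolding Kh_def using J_eq[of h] by (simp add: fun_eq_iff)
  qed
  have Gi: "integrable lborel ?G" by (rule gk_powr_integrable) (use assms in auto)
  show "integrable lborel (\<lambda>s. Kh h s * \<bar>s\<bar> powr \<alpha>)"
    unfolding eq using assms
    by (intro Bochner_Integration.integrable_mult_right lborel_integrable_real_affine[OF Gi]) auto
  have "(LBINT u. ?G u) = \<bar>h\<bar> *\<^sub>R (LBINT s. ?G (0 + h * s))"
    by (rule lborel_integral_real_affine) (use assms in auto)
  hence "(LBINT s. ?G (0 + h * s)) = (LBINT u. ?G u) / h" using assms by simp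
  thus "(LBINT s. Kh h s * \<bar>s\<bar> powr \<alpha>) = h * (LBINT s. gk s * \<bar>s\<bar> powr \<alpha>) / h powr \<alpha>"
    unfolding eq using assms by (simp add: power2_eq_square)
qed

theorem mainTheorem7:
  fixes a :: "nat \<Rightarrow> complex" and b :: "nat \<Rightarrow> real"
    and f :: "real \<Rightarrow> complex" and \<alpha> t0 :: real
  assumes "summable (\<lambda>j. norm (a j))"
    and "strict_mono b" and "\<And>j. b j > 0" and "filterlim b at_top sequentially"
    and "\<And>t. f t = (\<Sum>j. a j * exp (\<i> * of_real (b j * t)))"
    and "0 < \<alpha>" and "\<alpha> < 1"
    and "holder_at \<alpha> f t0"
  shows "bdd_above (range (\<lambda>j. norm (a j) * (delta_b b j) powr \<alpha>))"
proof -
  note sa = assms(1) and sm = assms(2) and bpos = assms(3) and fdef = assms(5)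
  obtain L \<eta> where L: "L > 0" and eta: "\<eta> > 0"
    and hol: "\<And>t. \<bar>t - t0\<bar> < \<eta> \<Longrightarrow> norm (f t - f t0) \<le> L * \<bar>t - t0\<bar> powr \<alpha>"
    using assms(8) unfolding holder_at_def by blast
  define M where "M = (\<Sum>j. norm (a j))"
  have sumexp: "summable (\<lambda>j. norm (a j * exp (\<i> * of_real (g j))))" for g
    using sa by (simp add: norm_mult)
  have fb: "norm (f t) \<le> M" for t
  proof -
    have "norm (f t) \<le> (\<Sum>j. norm (a j * exp (\<i> * of_real (b j * t))))"
      unfolding fdef by (rule summable_norm) (rule sumexp)
    thus ?thesis by (simp add: norm_mult M_def)
  qed
  define L' where "L' = L + 2 * M / \<eta> powr \<alpha>"
  have M0: "M \<ge> 0" unfolding M_def using sa by (simp add: suminf_nonneg)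
  have glob: "norm (f (t0 + s) - f t0) \<le> L' * \<bar>s\<bar> powr \<alpha>" for s
  proof (cases "\<bar>s\<bar> < \<eta>")
    case True
    have "norm (f (t0 + s) - f t0) \<le> L * \<bar>s\<bar> powr \<alpha>" using hol[of "t0 + s"] True by simp
    also have "\<dots> \<le> L' * \<bar>s\<bar> powr \<alpha>" unfolding L'_def using M0 eta
      by (intro mult_right_mono) auto
    finally show ?thesis .
  next
    case False
    have "norm (f (t0 + s) - f t0) \<le> norm (f (t0 + s)) + norm (f t0)" by (rule norm_triangle_ineq4)
    also have "\<dots> \<le> 2 * M" using fb[of "t0 + s"] fb[of t0] by simp
    also have "\<dots> \<le> 2 * M / \<eta> powr \<alpha> * \<bar>s\<bar> powr \<alpha>"
    proof -
      have "\<eta> powr \<alpha> \<le> \<bar>s\<bar> powr \<alpha>" using False eta assms(6) by (intro powr_mono2) auto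
      hence "1 \<le> \<bar>s\<bar> powr \<alpha> / \<eta> powr \<alpha>" using eta by simp
      hence "2 * M * 1 \<le> 2 * M * (\<bar>s\<bar> powr \<alpha> / \<eta> powr \<alpha>)" using M0 by (intro mult_left_mono) auto
      thus ?thesis by simp
    qed
    also have "\<dots> \<le> L' * \<bar>s\<bar> powr \<alpha>" unfolding L'_def using L
      by (intro mult_right_mono) auto
    finally show ?thesis .
  qed
  define C where "C = (LBINT s. gk s)"
  define C1 where "C1 = (LBINT s. gk s * \<bar>s\<bar> powr \<alpha>)"
  have Cpos: "C > 0" unfolding C_def by (rule C_pos)
  have main: "norm (a j) * delta_b b j powr \<alpha> \<le> L' * C1 / C" for j
  proof -
    define h where "h = delta_b b j"
    have bprev_nn: "bprev b j \<ge> 0" unfolding bprev_def using bpos by (simp add: less_imp_le)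
    have h1: "h \<le> b j - bprev b j" and h2: "h \<le> b (Suc j) - b j"
      unfolding h_def delta_b_def by auto
    have hpos: "h > 0"
    proof -
      have "b j - bprev b j > 0"
        using bpos[of 0] sm by (cases j) (auto simp: bprev_def strict_mono_def)
      moreover have "b (Suc j) - b j > 0" using sm by (simp add: strict_mono_def)
      ultimately show ?thesis unfolding h_def delta_b_def by simp
    qed
    have hbj: "h \<le> b j" using h1 bprev_nn by simp
    have gap: "h \<le> \<bar>b k - b j\<bar>" if "k \<noteq> j" for k
    proof (cases "k < j")
      case True
      then obtain i where j: "j = Suc i" and "k \<le> i" by (cases j) auto
      hence "b k \<le> b i" using sm by (simp add: strict_mono_less_eq)
      thus ?thesis using h1 j by (simp add: bprev_def)
    next
      case False
      hence "Suc j \<le> k" using that by simp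
      hence "b (Suc j) \<le> b k" using sm by (simp add: strict_mono_less_eq)
      thus ?thesis using h2 by simp
    qed
    define c where "c k = a k * exp (\<i> * of_real (b k * t0))" for k
    define E where "E l s = complex_of_real (Kh h s) * exp (\<i> * complex_of_real (l * s))" for l s
    define u where "u k s = c k * E (b k - b j) s" for k s
    define F where "F s = complex_of_real (Kh h s) * (f (t0 + s) - f t0) * exp (\<i> * complex_of_real ((- b j) * s))" for s
    have normc: "norm (c k) = norm (a k)" for k unfolding c_def by (simp add: norm_mult)
    have Eint: "integrable lborel (E l)" for l unfolding E_def by (rule Kh_exp_integrable)
    have Eval: "integral\<^sup>L lborel (E l) = complex_of_real (C * ((\<bar>l + h\<bar> + \<bar>l - h\<bar>) / 2 - \<bar>l\<bar>))" for l
      unfolding E_def C_def by (rule Kh_exp_integral)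
    have normE: "norm (E l s) = Kh h s" for l s unfolding E_def by (simp add: norm_mult Kh_nonneg)
    have normu: "norm (u k s) = norm (a k) * Kh h s" for k s unfolding u_def by (simp add: norm_mult normc normE)
    have Feq: "F s = (\<Sum>k. u k s) - f t0 * E (- b j) s" for s
    proof -
      have "f (t0 + s) * exp (\<i> * complex_of_real ((- b j) * s)) =
          (\<Sum>k. a k * exp (\<i> * of_real (b k * (t0 + s))) * exp (\<i> * complex_of_real ((- b j) * s)))"
        unfolding fdef by (rule suminf_mult2) (rule summable_norm_cancel[OF sumexp])
      also have "\<dots> = (\<Sum>k. c k * exp (\<i> * complex_of_real ((b k - b j) * s)))"
      proof (rule suminf_cong)
        fix k
        have "exp (\<i> * of_real (b k * (t0 + s))) * exp (\<i> * complex_of_real ((- b j) * s))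
            = exp (\<i> * of_real (b k * t0)) * exp (\<i> * complex_of_real ((b k - b j) * s))"
          by (simp only: exp_add[symmetric], rule arg_cong[where f=exp], simp add: algebra_simps)
        thus "a k * exp (\<i> * of_real (b k * (t0 + s))) * exp (\<i> * complex_of_real ((- b j) * s))
            = c k * exp (\<i> * complex_of_real ((b k - b j) * s))"
          unfolding c_def by (simp add: mult.assoc)
      qed
      finally have A: "f (t0 + s) * exp (\<i> * complex_of_real ((- b j) * s)) =
          (\<Sum>k. c k * exp (\<i> * complex_of_real ((b k - b j) * s)))" .
      have sc: "summable (\<lambda>k. c k * exp (\<i> * complex_of_real ((b k - b j) * s)))"
        by (rule summable_norm_cancel) (use sa in \<open>simp add: norm_mult normc\<close>)
      have "(\<Sum>k. u k s) = complex_of_real (Kh h s) * (\<Sum>k. c k * exp (\<i> * complex_of_real ((b k - b j) * s)))"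
        unfolding u_def E_def by (subst suminf_mult[OF sc, symmetric]) (simp add: algebra_simps)
      thus ?thesis unfolding F_def E_def A[symmetric] by (simp add: algebra_simps)
    qed
    have uint: "integrable lborel (u k)" for k
      unfolding u_def by (intro Bochner_Integration.integrable_mult_right Eint)
    have usum: "AE s in lborel. summable (\<lambda>k. norm (u k s))"
      by (intro AE_I2) (simp add: normu summable_mult2 sa)
    have uisum: "summable (\<lambda>k. (\<integral>s. norm (u k s) \<partial>lborel))"
      by (simp add: normu summable_mult2 sa)
    have Sint: "integrable lborel (\<lambda>s. \<Sum>k. u k s)"
      by (rule integrable_suminf[OF uint usum uisum])
    have Sval: "(\<integral>s. (\<Sum>k. u k s) \<partial>lborel) = (\<Sum>k. integral\<^sup>L lborel (u k))"
      by (rule integral_suminf[OF uint usum uisum])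
    have uval: "integral\<^sup>L lborel (u k) = (if k = j then c j * complex_of_real (C * h) else 0)" for k
    proof -
      have "integral\<^sup>L lborel (u k) = c k * integral\<^sup>L lborel (E (b k - b j))"
        unfolding u_def by simp
      also have "\<dots> = (if k = j then c j * complex_of_real (C * h) else 0)"
      proof (cases "k = j")
        case True thus ?thesis using hpos by (simp add: Eval)
      next
        case False
        have "(\<bar>(b k - b j) + h\<bar> + \<bar>(b k - b j) - h\<bar>) / 2 - \<bar>b k - b j\<bar> = 0"
          by (rule T_zero[OF less_imp_le[OF hpos] gap[OF False]])
        thus ?thesis unfolding Eval using False by simp
      qed
      finally show ?thesis .
    qed
    have "(\<Sum>k. integral\<^sup>L lborel (u k)) = c j * complex_of_real (C * h)"
      unfolding uval using sums_single[of j "\<lambda>_. c j * complex_of_real (C * h)"] by (simp add: sums_iff)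
    moreover have "integral\<^sup>L lborel (E (- b j)) = 0"
      unfolding Eval using T_zero[of h "- b j"] hpos hbj by simp
    ultimately have Fval: "integral\<^sup>L lborel F = c j * complex_of_real (C * h)"
      unfolding Feq[abs_def]
      using Sint Eint Sval by (subst Bochner_Integration.integral_diff) auto
    have Fint: "integrable lborel F"
      unfolding Feq[abs_def] using Sint Eint by auto
    have Bint: "integrable lborel (\<lambda>s. L' * (Kh h s * \<bar>s\<bar> powr \<alpha>))"
      using Kh_powr_integral(1)[OF hpos _ assms(7)] assms(6) by auto
    have Fbound: "norm (F s) \<le> L' * (Kh h s * \<bar>s\<bar> powr \<alpha>)" for s
    proof -
      have "norm (F s) = Kh h s * norm (f (t0 + s) - f t0)"
        unfolding F_def by (simp add: norm_mult Kh_nonneg)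
      also have "\<dots> \<le> Kh h s * (L' * \<bar>s\<bar> powr \<alpha>)"
        by (intro mult_left_mono glob Kh_nonneg)
      finally show ?thesis by (simp add: algebra_simps)
    qed
    have "norm (a j) * (C * h) = norm (integral\<^sup>L lborel F)"
      unfolding Fval using Cpos hpos by (simp add: norm_mult normc)
    also have "\<dots> \<le> (\<integral>s. norm (F s) \<partial>lborel)" by (rule integral_norm_bound)
    also have "\<dots> \<le> (\<integral>s. L' * (Kh h s * \<bar>s\<bar> powr \<alpha>) \<partial>lborel)"
      by (rule integral_mono[OF _ Bint Fbound]) (use Fint in simp)
    also have "\<dots> = L' * (h * C1 / h powr \<alpha>)"
      using Kh_powr_integral(2)[OF hpos _ assms(7)] assms(6) unfolding C1_def by simp
    finally have ineq: "norm (a j) * (C * h) \<le> L' * (h * C1 / h powr \<alpha>)" .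
    have hp: "h powr \<alpha> > 0" using hpos by simp
    from ineq have "norm (a j) * C * h powr \<alpha> * h \<le> L' * C1 * h"
      using hp hpos by (simp add: field_simps)
    hence "norm (a j) * C * h powr \<alpha> \<le> L' * C1" using hpos by simp
    hence "norm (a j) * h powr \<alpha> \<le> L' * C1 / C" using Cpos by (simp add: field_simps)
    thus ?thesis unfolding h_def .
  qed
  show ?thesis by (rule bdd_aboveI2) (rule main)
qed

end
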